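(* Let $n\in\mathbb N$, $\alpha>0$ and $1<p<\infty$. For every multi-index $\mathbf j=(j_1,\dots,j_n)\in(\mathbb N\cup\{0\})^n$, \[ P^n_\alpha G^n_{p,\alpha}(\psi_{\mathbf j,\alpha})=\left(\frac2p\right)^{|\mathbf j|p/2+n}\frac{\prod_{k=1}^n\Gamma(j_kp/2+1)}{\sqrt{\mathbf j!}^{\,p}}\,\psi_{\mathbf j,\alpha}. \] In particular, there is a constant $K_{\mathbf j,p,\alpha}$ such that $P^n_\alpha G^n_{p,\alpha}(\psi_{\mathbf j,\alpha})(z)=K_{\mathbf j,p,\alpha}z^{\mathbf j}$.
   Context: For $\alpha>0$, $\gamma^n_\alpha(dz)=(\alpha/\pi)^n e^{-\alpha|z|^2}\lambda^n(dz)$ on $\mathbb C^n$. $\psi_{\mathbf j,\alpha}(z)=\sqrt{\alpha^{|\mathbf j|}/\mathbf j!}\,z^{\mathbf j}$, with $|\mathbf j|=j_1+\dots+j_n$, $\mathbf j!=j_1!\cdots j_n!$, $z^{\mathbf j}=z_1^{j_1}\cdots z_n^{j_n}$. For a function $h$, $G^n_{p,\alpha}(h)(z)=|h(z)|^{p-2}h(z)e^{-\alpha(\frac p2-1)|z|^2}$ (taken to be $0$ where $h(z)=0$). $P^n_\alpha$ is the integral operator $(P^n_\alpha f)(z)=\int_{\mathbb C^n}e^{\alpha\langle z,w\rangle}f(w)\,\gamma^n_\alpha(dw)$, $\langle z,w\rangle=\sum_kz_k\overline{w_k}$. *)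

theory Defs
  imports "HOL-Analysis.Analysis"
begin

text \<open>C^n is modelled as complex ^ 'n for a finite index type 'n, n = CARD('n).
  Lebesgue measure on C^n = lborel on complex ^ 'n (identified with R^(2n)).
  Multi-indices are functions 'n => nat.\<close>

definition gauss_measure :: "real \<Rightarrow> (complex ^ 'n) measure" where
  "gauss_measure \<alpha> = density lborel
     (\<lambda>z. ennreal ((\<alpha> / pi) ^ CARD('n) * exp (- \<alpha> * (norm z)\<^sup>2)))"

definition mabs :: "('n::finite \<Rightarrow> nat) \<Rightarrow> nat" where
  "mabs j = (\<Sum>k\<in>UNIV. j k)"

definition mfact :: "('n::finite \<Rightarrow> nat) \<Rightarrow> nat" where
  "mfact j = (\<Prod>k\<in>UNIV. fact (j k))"

definition mpow :: "complex ^ 'n \<Rightarrow> ('n::finite \<Rightarrow> nat) \<Rightarrow> complex" where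
  "mpow z j = (\<Prod>k\<in>UNIV. (z $ k) ^ (j k))"

definition psi :: "('n::finite \<Rightarrow> nat) \<Rightarrow> real \<Rightarrow> complex ^ 'n \<Rightarrow> complex" where
  "psi j \<alpha> z = complex_of_real (sqrt (\<alpha> ^ mabs j / real (mfact j))) * mpow z j"

definition Gop :: "real \<Rightarrow> real \<Rightarrow> (complex ^ 'n \<Rightarrow> complex) \<Rightarrow> complex ^ 'n \<Rightarrow> complex" where
  "Gop p \<alpha> h z = (if h z = 0 then 0 else
     complex_of_real (norm (h z) powr (p - 2) * exp (- \<alpha> * (p / 2 - 1) * (norm z)\<^sup>2)) * h z)"

definition cinner :: "complex ^ 'n \<Rightarrow> complex ^ 'n \<Rightarrow> complex" where
  "cinner z w = (\<Sum>k\<in>UNIV. z $ k * cnj (w $ k))"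

definition Pop :: "real \<Rightarrow> (complex ^ 'n \<Rightarrow> complex) \<Rightarrow> complex ^ 'n \<Rightarrow> complex" where
  "Pop \<alpha> f z = (\<integral>w. exp (complex_of_real \<alpha> * cinner z w) * f w \<partial>(gauss_measure \<alpha>))"

end

theory Submission
  imports Defs
begin

lemma measurable_Complex_pair[measurable]:
  "(\<lambda>(x,y). Complex x y) \<in> borel_measurable (lborel \<Otimes>\<^sub>M lborel)"
proof -
  have "(\<lambda>(x,y). Complex x y) = (\<lambda>xy. complex_of_real (fst xy) + \<i> * complex_of_real (snd xy))"
    by (auto simp: fun_eq_iff complex_eq_iff)
  also have "\<dots> \<in> borel_measurable (lborel \<Otimes>\<^sub>M lborel)" by measurable
  finally show ?thesis .
qed

lemma lborel_complex_eq:
  "(lborel :: complex measure) = distr (lborel \<Otimes>\<^sub>M lborel) borel (\<lambda>(x,y). Complex x y)"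
proof (rule lborel_eqI)
  fix l u :: complex
  assume le: "\<And>b. b \<in> Basis \<Longrightarrow> l \<bullet> b \<le> u \<bullet> b"
  have "Re l \<le> Re u" "Im l \<le> Im u" using le[of 1] le[of \<i>] by (auto simp: Basis_complex_def)
  have eq: "(\<lambda>(x,y). Complex x y) -` box l u \<inter> space (lborel \<Otimes>\<^sub>M lborel) = {Re l<..<Re u} \<times> {Im l<..<Im u}"
    by (auto simp: mem_box Basis_complex_def space_pair_measure)
  have "emeasure (distr (lborel \<Otimes>\<^sub>M lborel) borel (\<lambda>(x,y). Complex x y)) (box l u)
      = emeasure (lborel \<Otimes>\<^sub>M lborel) ({Re l<..<Re u} \<times> {Im l<..<Im u})"
    by (subst emeasure_distr) (auto simp: eq)
  also have "\<dots> = ennreal ((Re u - Re l) * (Im u - Im l))"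
    using \<open>Re l \<le> Re u\<close> \<open>Im l \<le> Im u\<close>
    by (simp add: lborel.emeasure_pair_measure_Times ennreal_mult)
  also have "(Re u - Re l) * (Im u - Im l) = (\<Prod>b\<in>Basis. (u - l) \<bullet> b)"
    by (simp add: Basis_complex_def)
  finally show "emeasure (distr (lborel \<Otimes>\<^sub>M lborel) borel (\<lambda>(x,y). Complex x y)) (box l u) = (\<Prod>b\<in>Basis. (u - l) \<bullet> b)" .
qed simp

lemma nn_integral_complex:
  fixes f :: "complex \<Rightarrow> ennreal"
  assumes [measurable]: "f \<in> borel_measurable borel"
  shows "(\<integral>\<^sup>+w. f w \<partial>lborel) = (\<integral>\<^sup>+y. (\<integral>\<^sup>+x. f (Complex x y) \<partial>lborel) \<partial>lborel)"
proof -
  have "(\<integral>\<^sup>+w. f w \<partial>lborel) = (\<integral>\<^sup>+w. f w \<partial>distr (lborel \<Otimes>\<^sub>M lborel) borel (\<lambda>(x,y). Complex x y))"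
    by (subst lborel_complex_eq) simp
  also have "\<dots> = (\<integral>\<^sup>+xy. f (Complex (fst xy) (snd xy)) \<partial>(lborel \<Otimes>\<^sub>M lborel))"
    by (subst nn_integral_distr) (auto simp: case_prod_beta)
  also have "\<dots> = (\<integral>\<^sup>+y. (\<integral>\<^sup>+x. f (Complex x y) \<partial>lborel) \<partial>lborel)"
    by (subst lborel_pair.nn_integral_snd[symmetric]) auto
  finally show ?thesis .
qed

lemma nn_integral_complex':
  fixes f :: "complex \<Rightarrow> ennreal"
  assumes [measurable]: "f \<in> borel_measurable borel"
  shows "(\<integral>\<^sup>+w. f w \<partial>lborel) = (\<integral>\<^sup>+x. (\<integral>\<^sup>+y. f (Complex x y) \<partial>lborel) \<partial>lborel)"
proof -
  have "(\<integral>\<^sup>+w. f w \<partial>lborel) = (\<integral>\<^sup>+w. f w \<partial>distr (lborel \<Otimes>\<^sub>M lborel) borel (\<lambda>(x,y). Complex x y))"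
    by (subst lborel_complex_eq) simp
  also have "\<dots> = (\<integral>\<^sup>+xy. f (Complex (fst xy) (snd xy)) \<partial>(lborel \<Otimes>\<^sub>M lborel))"
    by (subst nn_integral_distr) (auto simp: case_prod_beta)
  also have "\<dots> = (\<integral>\<^sup>+x. (\<integral>\<^sup>+y. f (Complex x y) \<partial>lborel) \<partial>lborel)"
    by (subst lborel.nn_integral_fst[symmetric]) auto
  finally show ?thesis .
qed

lemma distr_lborel_complex_eqI:
  fixes S :: "complex \<Rightarrow> complex"
  assumes [measurable]: "S \<in> borel_measurable borel"
  assumes nn: "\<And>f. f \<in> borel_measurable borel \<Longrightarrow> (\<integral>\<^sup>+w. f (S w) \<partial>lborel) = (\<integral>\<^sup>+w. f w \<partial>lborel)"
  shows "distr lborel borel S = lborel"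
proof (rule measure_eqI)
  fix A assume A: "A \<in> sets (distr lborel borel S)"
  then have [measurable]: "A \<in> sets borel" by simp
  have SA: "S -` A \<in> sets lborel" using measurable_sets_borel[OF assms(1)] by simp
  have "emeasure (distr lborel borel S) A = emeasure lborel (S -` A)"
    by (subst emeasure_distr) auto
  also have "\<dots> = (\<integral>\<^sup>+w. indicator (S -` A) w \<partial>lborel)"
    using SA by simp
  also have "\<dots> = (\<integral>\<^sup>+w. indicator A (S w) \<partial>lborel)"
    by (simp add: indicator_def)
  also have "\<dots> = (\<integral>\<^sup>+w. indicator A w \<partial>lborel)"
    by (rule nn) simp
  also have "\<dots> = emeasure lborel A" by simp
  finally show "emeasure (distr lborel borel S) A = emeasure lborel A" .
qed simp

definition shx :: "real \<Rightarrow> complex \<Rightarrow> complex" where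
  "shx a w = Complex (Re w + a * Im w) (Im w)"
definition shy :: "real \<Rightarrow> complex \<Rightarrow> complex" where
  "shy a w = Complex (Re w) (Im w + a * Re w)"

lemma shx_measurable[measurable]: "shx a \<in> borel_measurable borel"
proof -
  have "shx a = (\<lambda>w. complex_of_real (Re w + a * Im w) + \<i> * complex_of_real (Im w))"
    by (auto simp: fun_eq_iff complex_eq_iff shx_def)
  also have "\<dots> \<in> borel_measurable borel" by measurable
  finally show ?thesis .
qed

lemma shy_measurable[measurable]: "shy a \<in> borel_measurable borel"
proof -
  have "shy a = (\<lambda>w. complex_of_real (Re w) + \<i> * complex_of_real (Im w + a * Re w))"
    by (auto simp: fun_eq_iff complex_eq_iff shy_def)
  also have "\<dots> \<in> borel_measurable borel" by measurable
  finally show ?thesis .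
qed

lemma distr_shx: "distr lborel borel (shx a) = lborel"
proof (rule distr_lborel_complex_eqI)
  fix f :: "complex \<Rightarrow> ennreal" assume [measurable]: "f \<in> borel_measurable borel"
  have "(\<integral>\<^sup>+w. f (shx a w) \<partial>lborel) = (\<integral>\<^sup>+y. (\<integral>\<^sup>+x. f (Complex (a*y + 1 * x) y) \<partial>lborel) \<partial>lborel)"
    by (subst nn_integral_complex) (auto simp: shx_def add.commute)
  also have "\<dots> = (\<integral>\<^sup>+y. (\<integral>\<^sup>+x. f (Complex x y) \<partial>lborel) \<partial>lborel)"
  proof (rule nn_integral_cong)
    fix y
    show "(\<integral>\<^sup>+x. f (Complex (a*y + 1 * x) y) \<partial>lborel) = (\<integral>\<^sup>+x. f (Complex x y) \<partial>lborel)"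
      using nn_integral_real_affine[of "\<lambda>x. f (Complex x y)" 1 "a*y"] by simp
  qed
  also have "\<dots> = (\<integral>\<^sup>+w. f w \<partial>lborel)"
    by (subst nn_integral_complex) auto
  finally show "(\<integral>\<^sup>+w. f (shx a w) \<partial>lborel) = (\<integral>\<^sup>+w. f w \<partial>lborel)" .
qed simp

lemma distr_shy: "distr lborel borel (shy a) = lborel"
proof (rule distr_lborel_complex_eqI)
  fix f :: "complex \<Rightarrow> ennreal" assume [measurable]: "f \<in> borel_measurable borel"
  have "(\<integral>\<^sup>+w. f (shy a w) \<partial>lborel) = (\<integral>\<^sup>+x. (\<integral>\<^sup>+y. f (Complex x (a*x + 1 * y)) \<partial>lborel) \<partial>lborel)"
    by (subst nn_integral_complex') (auto simp: shy_def add.commute)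
  also have "\<dots> = (\<integral>\<^sup>+x. (\<integral>\<^sup>+y. f (Complex x y) \<partial>lborel) \<partial>lborel)"
  proof (rule nn_integral_cong)
    fix x
    show "(\<integral>\<^sup>+y. f (Complex x (a*x + 1 * y)) \<partial>lborel) = (\<integral>\<^sup>+y. f (Complex x y) \<partial>lborel)"
      using nn_integral_real_affine[of "\<lambda>y. f (Complex x y)" 1 "a*x"] by simp
  qed
  also have "\<dots> = (\<integral>\<^sup>+w. f w \<partial>lborel)"
    by (subst nn_integral_complex') auto
  finally show "(\<integral>\<^sup>+w. f (shy a w) \<partial>lborel) = (\<integral>\<^sup>+w. f w \<partial>lborel)" .
qed simp

lemma distr_rotation:
  fixes u :: complex
  assumes u: "norm u = 1" "u \<noteq> -1"
  shows "distr lborel borel (\<lambda>w. u * w) = lborel"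
proof -
  define c where "c = Re u"
  define s where "s = Im u"
  have cs: "c^2 + s^2 = 1" using u(1) unfolding c_def s_def cmod_def
    by (metis norm_complex_def power2_eq_square real_sqrt_eq_1_iff)
  have c1: "1 + c \<noteq> 0"
  proof
    assume "1 + c = 0"
    then have "c = -1" by simp
    with cs have "s = 0" by simp
    with \<open>c = -1\<close> have "u = -1" unfolding c_def s_def by (simp add: complex_eq_iff)
    with u(2) show False by simp
  qed
  define t where "t = s / (1 + c)"
  have key: "(\<lambda>w. u * w) = shx (-t) \<circ> shy s \<circ> shx (-t)"
  proof
    fix w :: complex
    have e1: "1 - t * s = c" unfolding t_def using c1 cs
      by (simp add: field_simps power2_eq_square; smt (verit))
    have e3: "t * (1 + c) = s" by (simp add: t_def c1)
    have e2: "t + t * (1 - t * s) = s" unfolding e1 using e3 by (simp add: algebra_simps)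
    have cc: "c = 1 - t * s" using e1 by simp
    have e4: "s * Im w + s * (t * (t * Im w)) = t * (Im w * 2)"
    proof -
      have "(s + s * (t * t)) * Im w = (t * 2) * Im w" using e2 e1 by (simp add: algebra_simps)
      then show ?thesis by (simp add: algebra_simps)
    qed
    show "u * w = (shx (-t) \<circ> shy s \<circ> shx (-t)) w"
      using e4 by (simp add: shx_def shy_def complex_eq_iff c_def[symmetric] s_def[symmetric] cc algebra_simps)
  qed
  have "distr lborel borel (shx (-t) \<circ> shy s \<circ> shx (-t)) =
        distr (distr (distr lborel borel (shx (-t))) borel (shy s)) borel (shx (-t))"
    by (simp add: distr_distr comp_assoc)
  also have "\<dots> = lborel" by (simp add: distr_shx distr_shy)
  finally show ?thesis using key by (simp add: comp_def)
qed

lemma sq_le_aux: "0 \<le> (a::real) \<Longrightarrow> 0 \<le> x \<Longrightarrow> x \<le> sqrt a \<Longrightarrow> x^2 \<le> a"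
proof -
  assume "0 \<le> a" "0 \<le> x" "x \<le> sqrt a"
  then have "x^2 \<le> (sqrt a)^2" by (intro power_mono) auto
  then show ?thesis using \<open>0 \<le> a\<close> by simp
qed

definition radm :: "real measure" where
  "radm = density lborel (\<lambda>t. ennreal (pi * indicator {0..} t))"

lemma distr_radial: "distr (lborel::complex measure) borel (\<lambda>w. (cmod w)^2) = radm"
proof (rule measure_eqI_generator_eq[where E="range (\<lambda>a. {..a::real})" and \<Omega>=UNIV
      and A="\<lambda>i. {..real i}"])
  show "Int_stable (range (\<lambda>a. {..a::real}))"
    by (auto simp: Int_stable_def)
  show "range (\<lambda>a. {..a::real}) \<subseteq> Pow UNIV" by simp
  have sb: "sets (borel::real measure) = sigma_sets UNIV (range (\<lambda>a. {..a::real}))"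
    by (subst borel_eq_atMost) (simp add: sets_measure_of)
  show "sets (distr (lborel::complex measure) borel (\<lambda>w. (cmod w)^2)) = sigma_sets UNIV (range (\<lambda>a. {..a::real}))"
    using sb by simp
  show "sets radm = sigma_sets UNIV (range (\<lambda>a. {..a::real}))"
    using sb by (simp add: radm_def)
  show "range (\<lambda>i. {..real i}) \<subseteq> range (\<lambda>a. {..a::real})" by auto
  show "(\<Union>i. {..real i}) = UNIV"
    by (auto simp: real_arch_simple)
  have eqM: "emeasure (distr (lborel::complex measure) borel (\<lambda>w. (cmod w)^2)) {..a} = ennreal (pi * max a 0)" for a :: real
  proof (cases "a < 0")
    case True
    have "(\<lambda>w::complex. (cmod w)^2) -` {..a} = {}"
      using True by (auto simp: not_le) (smt (verit) zero_le_power2)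
    then show ?thesis using True by (subst emeasure_distr) auto
  next
    case False
    have "(\<lambda>w::complex. (cmod w)^2) -` {..a} = cball 0 (sqrt a)"
      using False by (auto simp: real_le_rsqrt dist_norm intro!: sq_le_aux)
    moreover have "emeasure (lborel::complex measure) (cball 0 (sqrt a)) = ennreal (pi * a)"
      using False by (subst emeasure_cball) (auto simp: unit_ball_vol_2)
    ultimately show ?thesis using False by (subst emeasure_distr) auto
  qed
  have eqN: "emeasure radm {..a} = ennreal (pi * max a 0)" for a :: real
  proof -
    have "emeasure radm {..a} = (\<integral>\<^sup>+t. ennreal pi * indicator {0..a} t \<partial>lborel)"
      unfolding radm_def
      by (subst emeasure_density) (auto intro!: nn_integral_cong simp: indicator_def ennreal_mult')
    also have "\<dots> = ennreal pi * emeasure lborel {0..a}"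
      by (subst nn_integral_cmult_indicator) auto
    also have "\<dots> = ennreal (pi * max a 0)"
      by (auto simp: ennreal_mult'[symmetric] max_def emeasure_lborel_Icc_eq)
    finally show ?thesis .
  qed
  show "emeasure (distr (lborel::complex measure) borel (\<lambda>w. (cmod w)^2)) X = emeasure radm X"
    if "X \<in> range (\<lambda>a. {..a::real})" for X
    using that eqM eqN by auto
  show "emeasure (distr (lborel::complex measure) borel (\<lambda>w. (cmod w)^2)) {..real i} \<noteq> \<infinity>" for i
    using eqM by simp
qed

lemma nn_integral_radial:
  fixes f :: "real \<Rightarrow> ennreal"
  assumes [measurable]: "f \<in> borel_measurable borel"
  shows "(\<integral>\<^sup>+w. f ((cmod w)^2) \<partial>(lborel::complex measure)) = (\<integral>\<^sup>+t. ennreal (pi * indicator {0..} t) * f t \<partial>lborel)"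
proof -
  have "(\<integral>\<^sup>+w. f ((cmod w)^2) \<partial>(lborel::complex measure)) = (\<integral>\<^sup>+t. f t \<partial>distr (lborel::complex measure) borel (\<lambda>w. (cmod w)^2))"
    by (subst nn_integral_distr) auto
  also have "\<dots> = (\<integral>\<^sup>+t. ennreal (pi * indicator {0..} t) * f t \<partial>lborel)"
    unfolding distr_radial radm_def by (subst nn_integral_density) auto
  finally show ?thesis .
qed

lemma integral_radial:
  fixes f :: "real \<Rightarrow> 'b::{banach, second_countable_topology}"
  assumes [measurable]: "f \<in> borel_measurable borel"
  shows "integrable (lborel::complex measure) (\<lambda>w. f ((cmod w)^2)) \<longleftrightarrow> integrable lborel (\<lambda>t. (pi * indicator {0..} t) *\<^sub>R f t)"
    and "(\<integral>w. f ((cmod w)^2) \<partial>(lborel::complex measure)) = (\<integral>t. (pi * indicator {0..} t) *\<^sub>R f t \<partial>lborel)"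
proof -
  have "integrable (lborel::complex measure) (\<lambda>w. f ((cmod w)^2)) \<longleftrightarrow> integrable (distr (lborel::complex measure) borel (\<lambda>w. (cmod w)^2)) f"
    by (subst integrable_distr_eq) auto
  also have "\<dots> \<longleftrightarrow> integrable lborel (\<lambda>t. (pi * indicator {0..} t) *\<^sub>R f t)"
    unfolding distr_radial radm_def by (subst integrable_density) auto
  finally show "integrable (lborel::complex measure) (\<lambda>w. f ((cmod w)^2)) \<longleftrightarrow> integrable lborel (\<lambda>t. (pi * indicator {0..} t) *\<^sub>R f t)" .
  have "(\<integral>w. f ((cmod w)^2) \<partial>(lborel::complex measure)) = (\<integral>t. f t \<partial>distr (lborel::complex measure) borel (\<lambda>w. (cmod w)^2))"
    by (subst integral_distr) auto
  also have "\<dots> = (\<integral>t. (pi * indicator {0..} t) *\<^sub>R f t \<partial>lborel)"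
    unfolding distr_radial radm_def by (subst integral_density) auto
  finally show "(\<integral>w. f ((cmod w)^2) \<partial>(lborel::complex measure)) = (\<integral>t. (pi * indicator {0..} t) *\<^sub>R f t \<partial>lborel)" .
qed

lemma gamma_nn_integral:
  fixes r b :: real
  assumes r: "r > -1" and b: "b > 0"
  shows "(\<integral>\<^sup>+t. ennreal (indicator {0..} t * t powr r * exp (-b*t)) \<partial>lborel) = ennreal (Gamma (r+1) / b powr (r+1))"
proof -
  define f where "f = (\<lambda>t::real. ennreal (indicator {0..} t * t powr r / exp t))"
  have [measurable]: "f \<in> borel_measurable borel" unfolding f_def by measurable
  have "ennreal (Gamma (r+1)) = (\<integral>\<^sup>+t. f t \<partial>lborel)"
    using Gamma_conv_nn_integral_real[of "r+1"] r by (simp add: f_def)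
  also have "\<dots> = ennreal b * (\<integral>\<^sup>+x. f (0 + b * x) \<partial>lborel)"
    using nn_integral_real_affine[of f b 0] b by simp
  also have "(\<integral>\<^sup>+x. f (0 + b * x) \<partial>lborel) = (\<integral>\<^sup>+x. ennreal (b powr r) * ennreal (indicator {0..} x * x powr r * exp (-b*x)) \<partial>lborel)"
  proof (rule nn_integral_cong)
    fix x :: real
    show "f (0 + b * x) = ennreal (b powr r) * ennreal (indicator {0..} x * x powr r * exp (-b*x))"
    proof (cases "x \<ge> 0")
      case True
      then show ?thesis using b
        by (auto simp: f_def indicator_def powr_mult ennreal_mult'[symmetric] exp_minus field_simps)
    next
      case False
      then have "\<not> (0 \<le> b * x)" using b by (simp add: zero_le_mult_iff)
      then show ?thesis using False by (simp add: f_def indicator_def)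
    qed
  qed
  also have "\<dots> = ennreal (b powr r) * (\<integral>\<^sup>+x. ennreal (indicator {0..} x * x powr r * exp (-b*x)) \<partial>lborel)"
    by (subst nn_integral_cmult) auto
  finally have eq0: "ennreal (Gamma (r+1)) = ennreal b * (ennreal (b powr r) * (\<integral>\<^sup>+x. ennreal (indicator {0..} x * x powr r * exp (-b*x)) \<partial>lborel))" .
  have bp: "b powr (r+1) = b * b powr r" using b by (simp add: powr_add)
  have eq: "ennreal (Gamma (r+1)) = ennreal (b powr (r+1)) * (\<integral>\<^sup>+x. ennreal (indicator {0..} x * x powr r * exp (-b*x)) \<partial>lborel)"
    unfolding eq0 bp using b by (simp add: ennreal_mult' mult.assoc)
  have pos: "b powr (r+1) > 0" using b by simp
  show ?thesis
  proof -
    have "ennreal (Gamma (r+1) / b powr (r+1)) = ennreal (Gamma (r+1)) * ennreal (1 / b powr (r+1))"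
      using pos Gamma_real_pos[of "r+1"] r by (subst ennreal_mult'[symmetric]) auto
    also have "\<dots> = (\<integral>\<^sup>+x. ennreal (indicator {0..} x * x powr r * exp (-b*x)) \<partial>lborel) * (ennreal (b powr (r+1)) * ennreal (1 / b powr (r+1)))"
      by (subst eq) (simp add: mult_ac)
    also have "ennreal (b powr (r+1)) * ennreal (1 / b powr (r+1)) = 1"
      using pos by (simp add: ennreal_mult'[symmetric])
    finally show ?thesis by simp
  qed
qed

lemma gamma_integral:
  fixes r b :: real
  assumes r: "r > -1" and b: "b > 0"
  shows "integrable lborel (\<lambda>t. indicator {0..} t * t powr r * exp (-b*t))"
    and "(\<integral>t. indicator {0..} t * t powr r * exp (-b*t) \<partial>lborel) = Gamma (r+1) / b powr (r+1)"
proof -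
  have g: "Gamma (r+1) > 0" using r by (intro Gamma_real_pos) simp
  have "integrable lborel (\<lambda>t. indicator {0..} t * t powr r * exp (-b*t)) \<and>
        (\<integral>t. indicator {0..} t * t powr r * exp (-b*t) \<partial>lborel) = Gamma (r+1) / b powr (r+1)"
    using g b gamma_nn_integral[OF r b]
    by (subst nn_integral_eq_integrable[symmetric]) (auto simp: indicator_def)
  then show "integrable lborel (\<lambda>t. indicator {0..} t * t powr r * exp (-b*t))"
    and "(\<integral>t. indicator {0..} t * t powr r * exp (-b*t) \<partial>lborel) = Gamma (r+1) / b powr (r+1)" by auto
qed

definition rho :: "real \<Rightarrow> nat \<Rightarrow> complex \<Rightarrow> real" where
  "rho p m w = (if m = 0 then 1 else cmod w powr (real m * (p - 2)))"

definition NN :: "real \<Rightarrow> nat \<Rightarrow> real \<Rightarrow> nat \<Rightarrow> complex \<Rightarrow> real" where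
  "NN p m b k w = (cmod w)^(k+m) * exp (-b * (cmod w)^2) * rho p m w"

lemma rho_measurable[measurable]: "rho p m \<in> borel_measurable borel"
  unfolding rho_def by measurable

lemma NN_measurable[measurable]: "NN p m b k \<in> borel_measurable borel"
  unfolding NN_def by measurable

lemma rho_nonneg: "rho p m w \<ge> 0" by (simp add: rho_def)

lemma NN_nonneg: "NN p m b k w \<ge> 0" by (simp add: NN_def rho_nonneg)

lemma NN_radial:
  fixes p b :: real and k m :: nat
  assumes p: "p > 1" and b: "b > 0"
  defines "r \<equiv> (real k + real m * (p - 1)) / 2"
  shows "integrable lborel (NN p m b k)"
    and "(\<integral>w. NN p m b k w \<partial>lborel) = pi * (Gamma (r+1) / b powr (r+1))"
proof -
  define g where "g = (\<lambda>t::real. sqrt t ^ (k+m) * exp (-b*t) * (if m = 0 then 1 else sqrt t powr (real m * (p - 2))))"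
  have [measurable]: "g \<in> borel_measurable borel" unfolding g_def by measurable
  have NNg: "NN p m b k w = g ((cmod w)^2)" for w
    by (simp add: NN_def g_def rho_def)
  have r: "r > -1"
  proof -
    have "real m * (p - 1) \<ge> 0" using p by simp
    then show ?thesis unfolding r_def by simp
  qed
  have ae: "AE t in lborel. (pi * indicator {0..} t) *\<^sub>R g t = pi * (indicator {0..} t * t powr r * exp (-b*t))"
    using AE_lborel_singleton[of 0]
  proof eventually_elim
    case (elim t)
    show ?case
    proof (cases "t > 0")
      case True
      have s1: "sqrt t ^ (k+m) = t powr ((real k + real m)/2)"
      proof -
        have "sqrt t ^ (k+m) = sqrt t powr (real (k+m))"
          using True by (subst powr_realpow) auto
        also have "\<dots> = (t powr (1/2)) powr (real (k+m))"
          using True by (simp add: powr_half_sqrt)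
        also have "\<dots> = t powr ((real k + real m)/2)"
          by (simp add: powr_powr)
        finally show ?thesis .
      qed
      have s2: "sqrt t powr (real m * (p - 2)) = t powr (real m * (p - 2) / 2)"
        using True by (simp add: powr_half_sqrt[symmetric] powr_powr)
      have "r = (real k + real m)/2 + (if m = 0 then 0 else real m * (p - 2) / 2)"
        unfolding r_def by (auto simp: field_simps)
      then show ?thesis using True s1 s2
        by (auto simp: g_def indicator_def powr_add)
    next
      case False
      then show ?thesis using elim by (simp add: indicator_def)
    qed
  qed
  have int1: "integrable lborel (\<lambda>t. pi * (indicator {0..} t * t powr r * exp (-b*t)))"
    using gamma_integral(1)[OF r b] by simp
  have int2: "integrable lborel (\<lambda>t. (pi * indicator {0..} t) *\<^sub>R g t)"
    using integrable_cong_AE[OF _ _ ae] int1 by (subst integrable_cong_AE[OF _ _ ae]) auto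
  show "integrable lborel (NN p m b k)"
    unfolding NNg using integral_radial(1)[of g] int2 by simp
  have "(\<integral>w. NN p m b k w \<partial>lborel) = (\<integral>t. (pi * indicator {0..} t) *\<^sub>R g t \<partial>lborel)"
    unfolding NNg using integral_radial(2)[of g] by simp
  also have "\<dots> = (\<integral>t. pi * (indicator {0..} t * t powr r * exp (-b*t)) \<partial>lborel)"
    by (rule integral_cong_AE[OF _ _ ae]) auto
  also have "\<dots> = pi * (Gamma (r+1) / b powr (r+1))"
    using gamma_integral(2)[OF r b] by simp
  finally show "(\<integral>w. NN p m b k w \<partial>lborel) = pi * (Gamma (r+1) / b powr (r+1))" .
qed

lemma exists_rot:
  fixes d :: nat
  assumes "d > 0"
  shows "\<exists>u::complex. norm u = 1 \<and> u \<noteq> -1 \<and> u ^ d \<noteq> 1"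
proof (cases "d = 1")
  case True
  then show ?thesis by (intro exI[of _ \<i>]) (auto simp: complex_eq_iff)
next
  case False
  with assms have d2: "d \<ge> 2" by simp
  define u where "u = cis (pi / d)"
  have "u ^ d = cis (real d * (pi / real d))" unfolding u_def by (rule Complex.DeMoivre)
  also have "real d * (pi / real d) = pi" using d2 by simp
  finally have "u ^ d = -1" by simp
  moreover have "Re u \<ge> 0" unfolding u_def
  proof -
    have "pi / d \<le> pi / 2" using d2 by (intro divide_left_mono) auto
    moreover have "pi / d \<ge> 0" by simp
    ultimately have "-(pi/2) \<le> pi / real d" "pi / real d \<le> pi/2" using pi_gt_zero by linarith+
    then show "Re (cis (pi / real d)) \<ge> 0" using cos_ge_zero[of "pi / real d"] by simp
  qed
  ultimately show ?thesis
    by (intro exI[of _ u]) (auto simp: u_def complex_eq_iff)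
qed

lemma cnj_measurable[measurable]: "cnj \<in> borel_measurable borel"
  by (intro borel_measurable_continuous_onI continuous_on_cnj continuous_on_id)

lemma integral_rotation:
  fixes f :: "complex \<Rightarrow> complex"
  assumes [measurable]: "f \<in> borel_measurable borel" and u: "norm u = 1" "u \<noteq> -1"
  shows "(\<integral>w. f (u * w) \<partial>lborel) = (\<integral>w. f w \<partial>lborel)"
proof -
  have [measurable]: "(\<lambda>w. u * w) \<in> borel_measurable borel" by measurable
  have "(\<integral>w. f w \<partial>lborel) = (\<integral>w. f w \<partial>distr lborel borel (\<lambda>w. u * w))"
    using distr_rotation[OF u] by simp
  also have "\<dots> = (\<integral>w. f (u * w) \<partial>lborel)"
    by (subst integral_distr) auto
  finally show ?thesis by simp
qed

lemma orthogonality: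
  fixes q :: "complex \<Rightarrow> complex" and k m :: nat
  assumes [measurable]: "q \<in> borel_measurable borel"
  assumes rad: "\<And>u w. norm u = 1 \<Longrightarrow> q (u * w) = q w"
  assumes km: "k \<noteq> m"
  shows "(\<integral>w. cnj w ^ k * w ^ m * q w \<partial>lborel) = 0"
proof -
  define J where "J = (\<integral>w. cnj w ^ k * w ^ m * q w \<partial>lborel)"
  have key: "J = cnj u ^ k * u ^ m * J" if u: "norm u = 1" "u \<noteq> -1" for u
  proof -
    have "J = (\<integral>w. cnj (u*w) ^ k * (u*w) ^ m * q (u*w) \<partial>lborel)"
      unfolding J_def by (rule integral_rotation[of "\<lambda>w. cnj w ^ k * w ^ m * q w" u, symmetric, OF _ u]) measurable
    also have "\<dots> = (\<integral>w. (cnj u ^ k * u ^ m) * (cnj w ^ k * w ^ m * q w) \<partial>lborel)"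
      using rad[OF u(1)] by (simp add: power_mult_distrib mult_ac)
    also have "\<dots> = cnj u ^ k * u ^ m * J"
      unfolding J_def by simp
    finally show ?thesis .
  qed
  have uu: "cnj u * u = 1" if "norm u = 1" for u :: complex
    using that by (metis complex_norm_square mult.commute of_real_1 power_one)
  show ?thesis
  proof (cases "k < m")
    case True
    obtain u :: complex where u: "norm u = 1" "u \<noteq> -1" "u ^ (m - k) \<noteq> 1"
      using exists_rot[of "m - k"] True by auto
    have "cnj u ^ k * u ^ m = (cnj u * u) ^ k * u ^ (m - k)"
      using True by (simp add: power_mult_distrib power_add[symmetric] mult_ac)
    also have "\<dots> = u ^ (m - k)" using uu[OF u(1)] by simp
    finally have "J = u ^ (m - k) * J" using key[OF u(1,2)] by simp
    then have "(u ^ (m - k) - 1) * J = 0" by (simp add: algebra_simps)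
    then show ?thesis using u(3) unfolding J_def by simp
  next
    case False
    with km have mk: "m < k" by simp
    obtain u :: complex where u: "norm u = 1" "u \<noteq> -1" "u ^ (k - m) \<noteq> 1"
      using exists_rot[of "k - m"] mk by auto
    have "cnj u ^ k * u ^ m = (cnj u * u) ^ m * cnj u ^ (k - m)"
      using mk by (simp add: power_mult_distrib power_add[symmetric] mult_ac)
    also have "\<dots> = cnj u ^ (k - m)" using uu[OF u(1)] by simp
    finally have "J = cnj u ^ (k - m) * J" using key[OF u(1,2)] by simp
    then have "(cnj u ^ (k - m) - 1) * J = 0" by (simp add: algebra_simps)
    moreover have "cnj u ^ (k - m) \<noteq> 1"
    proof
      assume "cnj u ^ (k - m) = 1"
      then have "cnj (u ^ (k - m)) = 1" by simp
      then have "u ^ (k - m) = 1" by (metis complex_cnj_cnj complex_cnj_one)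
      with u(3) show False by simp
    qed
    ultimately show ?thesis unfolding J_def by simp
  qed
qed

definition hq :: "real \<Rightarrow> nat \<Rightarrow> real \<Rightarrow> complex \<Rightarrow> complex" where
  "hq p m b w = complex_of_real (exp (-b * (cmod w)^2) * rho p m w)"

lemma hq_measurable[measurable]: "hq p m b \<in> borel_measurable borel"
  unfolding hq_def by measurable

lemma rho_rot: "norm u = 1 \<Longrightarrow> rho p m (u * w) = rho p m w"
  by (simp add: rho_def norm_mult)

lemma hq_rot: "norm u = 1 \<Longrightarrow> hq p m b (u * w) = hq p m b w"
  by (simp add: hq_def rho_rot norm_mult)

lemma exp_sq_bound:
  fixes A s b :: real
  assumes "b > 0"
  shows "exp (A * s) * exp (-b * s^2) \<le> exp (A^2 / (2*b)) * exp (-(b/2) * s^2)"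
proof -
  have "A * s - b * s^2 \<le> A^2 / (2*b) - (b/2) * s^2"
  proof -
    have "0 \<le> (A - b * s)^2 / (2*b)" using assms by simp
    also have "(A - b * s)^2 / (2*b) = A^2 / (2*b) - A * s + (b/2) * s^2"
      using assms by (simp add: field_simps power2_eq_square)
    finally show ?thesis by simp
  qed
  then show ?thesis by (simp add: exp_add[symmetric])
qed

lemma one_dim:
  fixes a b p :: real and m :: nat and z :: complex
  assumes p: "p > 1" and b: "b > 0"
  defines "F \<equiv> (\<lambda>w. exp (complex_of_real a * z * cnj w) * hq p m b w * w ^ m)"
  defines "r \<equiv> (real m + real m * (p - 1)) / 2"
  shows "integrable lborel F"
    and "(\<integral>w. F w \<partial>lborel) = complex_of_real (pi * (Gamma (r+1) / b powr (r+1)) * a ^ m / fact m) * z ^ m"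
proof -
  define f where "f = (\<lambda>k w. ((complex_of_real a * z)^k / fact k) * (cnj w ^ k * w ^ m * hq p m b w))"
  have [measurable]: "f k \<in> borel_measurable borel" for k unfolding f_def by measurable
  define A where "A = \<bar>a\<bar> * cmod z"
  have A0: "A \<ge> 0" by (simp add: A_def)
  have normf: "norm (f k w) = A^k / fact k * NN p m b k w" for k w
    by (simp add: f_def NN_def hq_def A_def norm_mult norm_divide norm_power rho_nonneg power_add
        power_mult_distrib)
  define N0 where "N0 = NN p m b 0"
  have NNk: "NN p m b k w = (cmod w)^k * N0 w" for k w
    by (simp add: N0_def NN_def power_add)
  have Fsum: "(\<lambda>k. f k w) sums F w" for w
  proof -
    have "(\<lambda>k. (complex_of_real a * z * cnj w)^k /\<^sub>R fact k * (hq p m b w * w ^ m)) sums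
          (exp (complex_of_real a * z * cnj w) * (hq p m b w * w ^ m))"
      by (rule sums_mult2[OF exp_converges])
    moreover have "(complex_of_real a * z * cnj w)^k /\<^sub>R fact k * (hq p m b w * w ^ m) = f k w" for k
    proof -
      have "(complex_of_real a * z * cnj w)^k /\<^sub>R fact k * (hq p m b w * w ^ m) =
            ((complex_of_real a * z * cnj w)^k / fact k) * (hq p m b w * w ^ m)"
        by (simp add: scaleR_conv_of_real divide_inverse mult_ac)
      also have "\<dots> = f k w" unfolding f_def by (simp add: power_mult_distrib mult_ac)
      finally show ?thesis .
    qed
    moreover have "exp (complex_of_real a * z * cnj w) * (hq p m b w * w ^ m) = F w"
      by (simp add: F_def mult_ac)
    ultimately show ?thesis by simp
  qed
  have intf: "integrable lborel (f k)" for k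
  proof (rule Bochner_Integration.integrable_bound)
    show "integrable lborel (\<lambda>w. A^k / fact k * NN p m b k w)"
      using NN_radial(1)[OF p b, where k=k and m=m] by simp
    show "AE w in lborel. norm (f k w) \<le> norm (A^k / fact k * NN p m b k w)"
      using A0 by (simp add: normf NN_nonneg)
  qed measurable
  have sumn: "summable (\<lambda>k. norm (f k w))" for w
  proof -
    have "summable (\<lambda>k. (A * cmod w)^k /\<^sub>R fact k * N0 w)"
      by (rule summable_mult2[OF summable_exp_generic])
    moreover have "(A * cmod w)^k /\<^sub>R fact k * N0 w = norm (f k w)" for k
      unfolding normf NNk by (simp add: power_mult_distrib divide_inverse mult_ac)
    ultimately show ?thesis by simp
  qed
  define B where "B = exp (A^2 / (2*b))"
  have intB: "integrable lborel (\<lambda>w. B * NN p m (b/2) 0 w)"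
    using NN_radial(1)[where p=p and b="b/2" and k=0 and m=m] p b by simp
  have suml: "summable (\<lambda>k. \<integral>w. norm (f k w) \<partial>lborel)"
  proof (rule summableI_nonneg_bounded)
    show "0 \<le> (\<integral>w. norm (f k w) \<partial>lborel)" for k by simp
    fix n
    have "(\<Sum>k<n. \<integral>w. norm (f k w) \<partial>lborel) = (\<integral>w. (\<Sum>k<n. norm (f k w)) \<partial>lborel)"
      by (rule Bochner_Integration.integral_sum[where I="{..<n}" and M=lborel and f="\<lambda>k w. norm (f k w)", symmetric])
        (auto intro: integrable_norm intf)
    also have "\<dots> \<le> (\<integral>w. B * NN p m (b/2) 0 w \<partial>lborel)"
    proof (rule integral_mono)
      show "integrable lborel (\<lambda>w. \<Sum>k<n. norm (f k w))"
        by (rule Bochner_Integration.integrable_sum) (auto intro: intf)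
      show "integrable lborel (\<lambda>w. B * NN p m (b/2) 0 w)" by (rule intB)
      fix w :: complex
      have "(\<Sum>k<n. norm (f k w)) = (\<Sum>k<n. (A * cmod w)^k /\<^sub>R fact k * N0 w)"
        unfolding normf NNk by (simp add: power_mult_distrib divide_inverse mult_ac)
      also have "\<dots> = (\<Sum>k<n. (A * cmod w)^k /\<^sub>R fact k) * N0 w"
        by (simp add: sum_distrib_right)
      also have "(\<Sum>k<n. (A * cmod w)^k /\<^sub>R fact k) \<le> exp (A * cmod w)"
      proof -
        have "(\<Sum>k<n. (A * cmod w)^k /\<^sub>R fact k) \<le> (\<Sum>k. (A * cmod w)^k /\<^sub>R fact k)"
          by (rule sum_le_suminf[OF summable_exp_generic]) (auto simp: A0)
        also have "\<dots> = exp (A * cmod w)" using exp_converges sums_unique by metis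
        finally show ?thesis .
      qed
      then have "(\<Sum>k<n. (A * cmod w)^k /\<^sub>R fact k) * N0 w \<le> exp (A * cmod w) * N0 w"
        by (rule mult_right_mono) (simp add: NN_nonneg N0_def)
      also have "exp (A * cmod w) * N0 w = (exp (A * cmod w) * exp (-b * (cmod w)^2)) * ((cmod w)^m * rho p m w)"
        by (simp add: N0_def NN_def mult_ac)
      also have "\<dots> \<le> (exp (A^2 / (2*b)) * exp (-(b/2) * (cmod w)^2)) * ((cmod w)^m * rho p m w)"
        by (rule mult_right_mono[OF exp_sq_bound[OF b]]) (simp add: rho_nonneg)
      also have "\<dots> = B * NN p m (b/2) 0 w"
        by (simp add: B_def NN_def mult_ac)
      finally show "(\<Sum>k<n. norm (f k w)) \<le> B * NN p m (b/2) 0 w" .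
    qed
    finally show "(\<Sum>k<n. \<integral>w. norm (f k w) \<partial>lborel) \<le> (\<integral>w. B * NN p m (b/2) 0 w \<partial>lborel)" .
  qed
  have Feq: "F = (\<lambda>w. \<Sum>k. f k w)"
    using Fsum sums_unique by (metis)
  show "integrable lborel F"
    unfolding Feq by (rule integrable_suminf[OF intf _ suml]) (simp add: sumn)
  have "(\<integral>w. F w \<partial>lborel) = (\<Sum>k. \<integral>w. f k w \<partial>lborel)"
    unfolding Feq by (rule integral_suminf[OF intf _ suml]) (simp add: sumn)
  also have "(\<lambda>k. \<integral>w. f k w \<partial>lborel) = (\<lambda>k. if k = m then \<integral>w. f m w \<partial>lborel else 0)"
  proof
    fix k
    show "(\<integral>w. f k w \<partial>lborel) = (if k = m then \<integral>w. f m w \<partial>lborel else 0)"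
    proof (cases "k = m")
      case False
      have "(\<integral>w. f k w \<partial>lborel) = ((complex_of_real a * z)^k / fact k) * (\<integral>w. cnj w ^ k * w ^ m * hq p m b w \<partial>lborel)"
        unfolding f_def by simp
      also have "(\<integral>w. cnj w ^ k * w ^ m * hq p m b w \<partial>lborel) = 0"
        by (rule orthogonality[OF _ hq_rot False]) measurable
      finally show ?thesis using False by simp
    qed simp
  qed
  also have "(\<Sum>k. if k = m then \<integral>w. f m w \<partial>lborel else 0) = (\<integral>w. f m w \<partial>lborel)"
    using sums_single[of m "\<lambda>_. \<integral>w. f m w \<partial>lborel"] sums_unique by metis
  also have "(\<integral>w. f m w \<partial>lborel) = ((complex_of_real a * z)^m / fact m) * (\<integral>w. complex_of_real (NN p m b m w) \<partial>lborel)"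
  proof -
    have "cnj w ^ m * w ^ m * hq p m b w = complex_of_real (NN p m b m w)" for w
    proof -
      have "cnj w ^ m * w ^ m = (cnj w * w) ^ m" by (simp add: power_mult_distrib)
      also have "cnj w * w = complex_of_real ((cmod w)^2)" by (metis complex_norm_square mult.commute of_real_power)
      finally show ?thesis
        by (simp add: hq_def NN_def power_mult_distrib power_add mult_ac power2_eq_square)
    qed
    then show ?thesis unfolding f_def by simp
  qed
  also have "(\<integral>w. complex_of_real (NN p m b m w) \<partial>lborel) = complex_of_real (pi * (Gamma (r+1) / b powr (r+1)))"
    using NN_radial(2)[OF p b, where k=m and m=m] unfolding r_def by simp
  finally show "(\<integral>w. F w \<partial>lborel) = complex_of_real (pi * (Gamma (r+1) / b powr (r+1)) * a ^ m / fact m) * z ^ m"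
    by (simp add: power_mult_distrib field_simps)
qed

lemma vec_lambda_sum_axis: "(\<chi> i. f i) = (\<Sum>i\<in>UNIV. axis i (f i))"
  by (simp add: vec_eq_iff axis_def sum.delta)

lemma axis_measurable[measurable]:
  fixes i :: "'n::finite"
  shows "(axis i :: 'a::euclidean_space \<Rightarrow> 'a ^ 'n) \<in> borel_measurable borel"
proof -
  have "linear (axis i :: 'a \<Rightarrow> 'a ^ 'n)"
    by (rule linearI) (auto simp: axis_def vec_eq_iff)
  then have "bounded_linear (axis i :: 'a \<Rightarrow> 'a ^ 'n)"
    by (simp add: linear_conv_bounded_linear)
  then show ?thesis
    by (intro borel_measurable_continuous_onI bounded_linear.continuous_on[OF _ continuous_on_id])
qed

lemma vec_lambda_measurable:
  "(\<lambda>f. \<chi> i. f i) \<in> measurable (Pi\<^sub>M UNIV (\<lambda>_::'n::finite. (lborel :: complex measure))) borel"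
proof -
  have "(\<lambda>f. \<Sum>i\<in>UNIV. axis i (f i)) \<in> measurable (Pi\<^sub>M UNIV (\<lambda>_::'n::finite. (lborel :: complex measure))) borel"
  proof (intro borel_measurable_sum)
    fix i :: 'n
    have "(\<lambda>f. f i) \<in> measurable (Pi\<^sub>M UNIV (\<lambda>_::'n::finite. (lborel :: complex measure))) lborel"
      by (rule measurable_component_singleton) simp
    then have "(\<lambda>f. f i) \<in> measurable (Pi\<^sub>M UNIV (\<lambda>_::'n::finite. (lborel :: complex measure))) borel"
      by (simp add: measurable_lborel2)
    then show "(\<lambda>f. axis i (f i) :: complex ^ 'n) \<in> borel_measurable (Pi\<^sub>M UNIV (\<lambda>_::'n::finite. (lborel :: complex measure)))"
      by (rule measurable_compose) (rule axis_measurable)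
  qed
  then show ?thesis by (simp add: vec_lambda_sum_axis)
qed

lemma mem_box_vec:
  fixes l u x :: "'a::euclidean_space ^ 'n"
  shows "x \<in> box l u \<longleftrightarrow> (\<forall>i. x $ i \<in> box (l $ i) (u $ i))"
  by (auto simp: mem_box Basis_vec_def inner_axis)

lemma lborel_vec_eq:
  "(lborel :: (complex ^ 'n::finite) measure) = distr (Pi\<^sub>M UNIV (\<lambda>_. lborel)) borel (\<lambda>f. \<chi> i. f i)"
proof (rule lborel_eqI)
  interpret product_sigma_finite "\<lambda>_::'n. lborel::complex measure"
    by (intro product_sigma_finite.intro sigma_finite_lborel)
  fix l u :: "complex ^ 'n"
  assume le: "\<And>b. b \<in> Basis \<Longrightarrow> l \<bullet> b \<le> u \<bullet> b"
  have le': "(l $ i) \<bullet> c \<le> (u $ i) \<bullet> c" if "c \<in> Basis" for i c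
    using le[of "axis i c"] that by (auto simp: Basis_vec_def inner_axis)
  have eq: "(\<lambda>f. \<chi> i. f i) -` box l u \<inter> space (Pi\<^sub>M UNIV (\<lambda>_::'n. lborel::complex measure)) =
            Pi\<^sub>E UNIV (\<lambda>i. box (l $ i) (u $ i))"
    by (auto simp: mem_box_vec space_PiM PiE_def Pi_def)
  have "emeasure (distr (Pi\<^sub>M UNIV (\<lambda>_. lborel)) borel (\<lambda>f. \<chi> i. f i)) (box l u) =
        emeasure (Pi\<^sub>M UNIV (\<lambda>_::'n. lborel::complex measure)) (Pi\<^sub>E UNIV (\<lambda>i. box (l $ i) (u $ i)))"
    by (subst emeasure_distr) (auto simp: eq vec_lambda_measurable)
  also have "\<dots> = (\<Prod>i\<in>UNIV. emeasure lborel (box (l $ i) (u $ i)))"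
    by (subst emeasure_PiM) auto
  also have "\<dots> = (\<Prod>i\<in>UNIV. ennreal (\<Prod>c\<in>Basis. (u $ i - l $ i) \<bullet> c))"
    using le' by (intro prod.cong refl) (simp add: emeasure_lborel_box)
  also have "\<dots> = ennreal (\<Prod>i\<in>UNIV. \<Prod>c\<in>Basis. (u $ i - l $ i) \<bullet> c)"
    using le' by (subst prod_ennreal) (auto intro!: prod_nonneg simp: inner_diff_left)
  also have "(\<Prod>i\<in>UNIV. \<Prod>c\<in>Basis. (u $ i - l $ i) \<bullet> c) = (\<Prod>b\<in>Basis. (u - l) \<bullet> b)"
  proof -
    have inj: "inj_on (\<lambda>(i, c). axis i c) (UNIV \<times> (Basis :: complex set))"
      by (auto simp: inj_on_def axis_eq_axis nonzero_Basis)
    have B: "(Basis :: (complex ^ 'n) set) = (\<lambda>(i, c). axis i c) ` (UNIV \<times> Basis)"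
      by (auto simp: Basis_vec_def)
    have "(\<Prod>b\<in>Basis. (u - l) \<bullet> b) = (\<Prod>(i,c)\<in>UNIV \<times> Basis. (u - l) \<bullet> axis i c)"
      unfolding B by (subst prod.reindex[OF inj]) (simp add: comp_def case_prod_beta)
    also have "\<dots> = (\<Prod>i\<in>UNIV. \<Prod>c\<in>Basis. (u - l) \<bullet> axis i c)"
      by (rule prod.cartesian_product[symmetric])
    also have "\<dots> = (\<Prod>i\<in>UNIV. \<Prod>c\<in>Basis. (u $ i - l $ i) \<bullet> c)"
      by (simp add: inner_axis)
    finally show ?thesis by simp
  qed
  finally show "emeasure (distr (Pi\<^sub>M UNIV (\<lambda>_. lborel)) borel (\<lambda>f. \<chi> i. f i)) (box l u) = (\<Prod>b\<in>Basis. (u - l) \<bullet> b)" .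
qed simp

lemma vec_nth_measurable[measurable]:
  "(\<lambda>w::'a::euclidean_space ^ 'n::finite. w $ k) \<in> borel_measurable borel"
  by (intro borel_measurable_continuous_onI bounded_linear.continuous_on[OF bounded_linear_vec_nth continuous_on_id])

lemma integral_vec_prod:
  fixes F :: "'n::finite \<Rightarrow> complex \<Rightarrow> complex"
  assumes int: "\<And>k. integrable lborel (F k)" and [measurable]: "\<And>k. F k \<in> borel_measurable borel"
  shows "(\<integral>w. (\<Prod>k\<in>UNIV. F k (w $ k)) \<partial>(lborel :: (complex ^ 'n) measure)) = (\<Prod>k\<in>UNIV. \<integral>x. F k x \<partial>lborel)"
proof -
  interpret product_sigma_finite "\<lambda>_::'n. lborel::complex measure"
    by (intro product_sigma_finite.intro sigma_finite_lborel)
  have m: "(\<lambda>w::complex ^ 'n. \<Prod>k\<in>UNIV. F k (w $ k)) \<in> borel_measurable borel" by measurable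
  have "(\<integral>w. (\<Prod>k\<in>UNIV. F k (w $ k)) \<partial>(lborel :: (complex ^ 'n) measure)) =
        (\<integral>w. (\<Prod>k\<in>UNIV. F k (w $ k)) \<partial>distr (Pi\<^sub>M UNIV (\<lambda>_. lborel)) borel (\<lambda>f. \<chi> i. f i))"
    by (subst lborel_vec_eq) simp
  also have "\<dots> = (\<integral>f. (\<Prod>k\<in>UNIV. F k (f k)) \<partial>Pi\<^sub>M UNIV (\<lambda>_. lborel))"
    by (subst integral_distr[OF vec_lambda_measurable m]) simp
  also have "\<dots> = (\<Prod>k\<in>UNIV. \<integral>x. F k x \<partial>lborel)"
    by (rule product_integral_prod) (auto intro: int)
  finally show ?thesis .
qed

lemma norm_vec_sq: "(norm (w :: complex ^ 'n::finite))^2 = (\<Sum>k\<in>UNIV. (cmod (w $ k))^2)"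
  by (simp add: norm_vec_def L2_set_def sum_nonneg)

lemma Gop_psi:
  fixes \<alpha> p :: real and j :: "'n::finite \<Rightarrow> nat"
  assumes "\<alpha> > 0"
  defines "c \<equiv> sqrt (\<alpha> ^ mabs j / real (mfact j))"
  shows "Gop p \<alpha> (psi j \<alpha>) w = complex_of_real (c powr (p - 1) * exp (- \<alpha> * (p / 2 - 1) * (norm w)\<^sup>2)) *
     (\<Prod>k\<in>UNIV. complex_of_real (rho p (j k) (w $ k)) * (w $ k) ^ (j k))"
proof -
  have mf: "real (mfact j) > 0" by (simp add: mfact_def prod_pos)
  have c: "c > 0" unfolding c_def using assms mf by simp
  have psi: "psi j \<alpha> w = complex_of_real c * mpow w j" by (simp add: psi_def c_def)
  show ?thesis
  proof (cases "psi j \<alpha> w = 0")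
    case True
    then have "mpow w j = 0" using c psi by simp
    then obtain k where k: "(w $ k) ^ (j k) = 0" by (auto simp: mpow_def)
    then have "w $ k = 0" "j k \<noteq> 0" by auto
    then have "complex_of_real (rho p (j k) (w $ k)) * (w $ k) ^ (j k) = 0" by simp
    then have "(\<Prod>k\<in>UNIV. complex_of_real (rho p (j k) (w $ k)) * (w $ k) ^ (j k)) = 0"
      by (intro prod_zero) auto
    then show ?thesis using True by (simp add: Gop_def)
  next
    case False
    then have mp: "mpow w j \<noteq> 0" using psi by simp
    then have nz: "(w $ k) ^ (j k) \<noteq> 0" for k by (auto simp: mpow_def)
    have nrm: "norm (psi j \<alpha> w) = c * (\<Prod>k\<in>UNIV. cmod (w $ k) ^ (j k))"
      using c by (simp add: psi mpow_def norm_mult prod_norm[symmetric] norm_power)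
    have rk: "(cmod (w $ k) ^ (j k)) powr (p - 2) = rho p (j k) (w $ k)" for k
    proof (cases "j k = 0")
      case True then show ?thesis by (simp add: rho_def)
    next
      case False
      then have "w $ k \<noteq> 0" using nz[of k] by auto
      then have "(cmod (w $ k) ^ (j k)) = cmod (w $ k) powr (real (j k))"
        by (simp add: powr_realpow)
      then show ?thesis using False by (simp add: rho_def powr_powr)
    qed
    have "norm (psi j \<alpha> w) powr (p - 2) = c powr (p - 2) * (\<Prod>k\<in>UNIV. rho p (j k) (w $ k))"
      unfolding nrm powr_mult prod_powr_distrib rk by simp
    then have "Gop p \<alpha> (psi j \<alpha>) w = complex_of_real (c powr (p - 2) * (\<Prod>k\<in>UNIV. rho p (j k) (w $ k)) *
         exp (- \<alpha> * (p / 2 - 1) * (norm w)\<^sup>2)) * (complex_of_real c * mpow w j)"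
      using False by (simp add: Gop_def psi)
    also have "\<dots> = complex_of_real (c powr (p - 2) * c * exp (- \<alpha> * (p / 2 - 1) * (norm w)\<^sup>2)) *
         ((\<Prod>k\<in>UNIV. complex_of_real (rho p (j k) (w $ k))) * (\<Prod>k\<in>UNIV. (w $ k) ^ (j k)))"
      by (simp add: mpow_def mult_ac)
    also have "(\<Prod>k\<in>UNIV. complex_of_real (rho p (j k) (w $ k))) * (\<Prod>k\<in>UNIV. (w $ k) ^ (j k)) =
        (\<Prod>k\<in>UNIV. complex_of_real (rho p (j k) (w $ k)) * (w $ k) ^ (j k))"
      by (simp add: prod.distrib)
    also have "c powr (p - 2) * c = c powr (p - 1)"
      using c by (simp add: powr_mult_base powr_add[symmetric] mult.commute[of _ c]) 
    finally show ?thesis .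
  qed
qed

lemma integrand_prod:
  fixes \<alpha> p :: real and j :: "'n::finite \<Rightarrow> nat" and z w :: "complex ^ 'n"
  assumes a: "\<alpha> > 0"
  defines "c \<equiv> sqrt (\<alpha> ^ mabs j / real (mfact j))"
  defines "b \<equiv> \<alpha> * p / 2"
  defines "G \<equiv> (\<lambda>k \<omega>. complex_of_real (\<alpha> / pi) * (exp (complex_of_real \<alpha> * (z $ k) * cnj \<omega>) * hq p (j k) b \<omega> * \<omega> ^ (j k)))"
  shows "((\<alpha> / pi) ^ CARD('n) * exp (- \<alpha> * (norm w)\<^sup>2)) *\<^sub>R (exp (complex_of_real \<alpha> * cinner z w) * Gop p \<alpha> (psi j \<alpha>) w)
     = complex_of_real (c powr (p - 1)) * (\<Prod>k\<in>UNIV. G k (w $ k))"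
proof -
  define \<Phi> where "\<Phi> = (\<Prod>k\<in>UNIV. complex_of_real (rho p (j k) (w $ k)) * (w $ k) ^ (j k))"
  have e1: "exp (complex_of_real \<alpha> * cinner z w) = (\<Prod>k\<in>UNIV. exp (complex_of_real \<alpha> * (z $ k) * cnj (w $ k)))"
    by (simp add: cinner_def sum_distrib_left exp_sum mult_ac)
  have e2: "exp (- b * (norm w)\<^sup>2) = (\<Prod>k\<in>UNIV. exp (- b * (cmod (w $ k))^2))"
    by (simp add: norm_vec_sq sum_distrib_left exp_sum)
  have "(\<Prod>k\<in>UNIV. G k (w $ k)) = (\<Prod>k\<in>(UNIV::'n set). complex_of_real (\<alpha> / pi)) *
        ((\<Prod>k\<in>UNIV. exp (complex_of_real \<alpha> * (z $ k) * cnj (w $ k))) *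
        ((\<Prod>k\<in>UNIV. complex_of_real (exp (- b * (cmod (w $ k))^2))) * \<Phi>))"
  proof -
    have "(\<Prod>k\<in>UNIV. G k (w $ k)) = (\<Prod>k\<in>UNIV. complex_of_real (\<alpha> / pi) *
        (exp (complex_of_real \<alpha> * (z $ k) * cnj (w $ k)) *
        (complex_of_real (exp (- b * (cmod (w $ k))^2)) * (complex_of_real (rho p (j k) (w $ k)) * (w $ k) ^ (j k)))))"
      by (rule prod.cong) (simp_all add: G_def hq_def mult_ac)
    also have "\<dots> = (\<Prod>k\<in>(UNIV::'n set). complex_of_real (\<alpha> / pi)) *
        ((\<Prod>k\<in>UNIV. exp (complex_of_real \<alpha> * (z $ k) * cnj (w $ k))) *
        ((\<Prod>k\<in>UNIV. complex_of_real (exp (- b * (cmod (w $ k))^2))) * \<Phi>))"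
      unfolding \<Phi>_def by (simp only: prod.distrib)
    finally show ?thesis .
  qed
  also have "\<dots> = complex_of_real ((\<alpha> / pi) ^ CARD('n) * exp (- b * (norm w)\<^sup>2)) * exp (complex_of_real \<alpha> * cinner z w) * \<Phi>"
    unfolding e1 e2 by (simp add: mult_ac)
  finally have P: "(\<Prod>k\<in>UNIV. G k (w $ k)) = complex_of_real ((\<alpha> / pi) ^ CARD('n) * exp (- b * (norm w)\<^sup>2)) * exp (complex_of_real \<alpha> * cinner z w) * \<Phi>" .
  have ee: "exp (- \<alpha> * (norm w)\<^sup>2) * exp (- \<alpha> * (p / 2 - 1) * (norm w)\<^sup>2) = exp (- b * (norm w)\<^sup>2)"
    unfolding b_def by (simp add: exp_add[symmetric] algebra_simps)
  have L: "((\<alpha> / pi) ^ CARD('n) * exp (- \<alpha> * (norm w)\<^sup>2)) *\<^sub>R (exp (complex_of_real \<alpha> * cinner z w) * Gop p \<alpha> (psi j \<alpha>) w)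
     = complex_of_real (((\<alpha> / pi) ^ CARD('n) * (exp (- \<alpha> * (norm w)\<^sup>2) * exp (- \<alpha> * (p / 2 - 1) * (norm w)\<^sup>2))) * c powr (p - 1))
       * exp (complex_of_real \<alpha> * cinner z w) * \<Phi>"
    unfolding Gop_psi[OF a, of p j w, folded c_def, folded \<Phi>_def] scaleR_conv_of_real
    by (simp only: of_real_mult mult_ac)
  show ?thesis
    unfolding L P ee by (simp only: of_real_mult mult_ac)
qed

lemma factor_ident:
  fixes \<alpha> p \<Gamma> :: real and m :: nat
  assumes a: "\<alpha> > 0" and p: "p > 1"
  shows "\<alpha> / pi * (pi * (\<Gamma> / (\<alpha> * p / 2) powr (real m * p / 2 + 1)) * \<alpha> ^ m / fact m)
       = \<Gamma> * \<alpha> powr (real m * (1 - p / 2)) * (2 / p) powr (real m * p / 2 + 1) / fact m"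
proof -
  define r where "r = real m * p / 2 + 1"
  have p0: "p / 2 > 0" using p by simp
  have e1: "(\<alpha> * p / 2) powr r = \<alpha> powr r * (p / 2) powr r"
    by (simp add: powr_mult[symmetric])
  have e2: "(2 / p) powr r = 1 / (p / 2) powr r"
    using p0 by (simp add: powr_divide)
  have e3: "\<alpha> * \<alpha> ^ m = \<alpha> powr (real m + 1)"
    using a by (simp add: powr_add powr_realpow)
  have e4: "\<alpha> powr (real m * (1 - p / 2)) = \<alpha> powr (real m + 1) / \<alpha> powr r"
    using a by (simp add: r_def powr_diff[symmetric] algebra_simps)
  have "\<alpha> / pi * (pi * (\<Gamma> / (\<alpha> * p / 2) powr r) * \<alpha> ^ m / fact m)
      = \<Gamma> * (\<alpha> * \<alpha> ^ m) / ((\<alpha> * p / 2) powr r) / fact m"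
    using pi_gt_zero by (simp add: field_simps)
  also have "\<dots> = \<Gamma> * (\<alpha> powr (real m + 1) / \<alpha> powr r) * (1 / (p / 2) powr r) / fact m"
    unfolding e1 e3 by (simp add: field_simps)
  also have "\<dots> = \<Gamma> * \<alpha> powr (real m * (1 - p / 2)) * (2 / p) powr r / fact m"
    unfolding e2 e4 ..
  finally show ?thesis unfolding r_def .
qed

lemma final_ident:
  fixes \<alpha> p L J G T :: real
  assumes a: "\<alpha> > 0" and p: "p > 1" and J: "J > 0"
  defines "c \<equiv> sqrt (\<alpha> powr L / J)"
  shows "c powr (p - 1) * (G * \<alpha> powr (L * (1 - p / 2)) * T / J) = T * G / (sqrt J powr p) * c"
proof -
  have c: "c > 0" unfolding c_def using a J by simp
  have c2: "c^2 = \<alpha> powr L / J" unfolding c_def using a J by simp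
  have cc: "c^2 = c powr 2" using c by (simp add: powr_numeral)
  have "c powr p = (c^2) powr (p / 2)"
    unfolding cc powr_powr by simp
  also have "\<dots> = \<alpha> powr (L * p / 2) / J powr (p / 2)"
    unfolding c2 using a J by (simp add: powr_divide powr_powr)
  finally have cp: "c powr p = \<alpha> powr (L * p / 2) / J powr (p / 2)" .
  have cp1: "c powr (p - 1) = c powr p / c"
    using c by (simp add: powr_diff)
  have sj: "sqrt J powr p = J powr (p / 2)"
    using J by (simp add: powr_half_sqrt[symmetric] powr_powr)
  have aL: "\<alpha> powr (L * p / 2) * \<alpha> powr (L * (1 - p / 2)) = c * c * J"
    using c2 a J by (simp add: powr_add[symmetric] algebra_simps power2_eq_square)
  define A where "A = \<alpha> powr (L * p / 2)"
  define B where "B = \<alpha> powr (L * (1 - p / 2))"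
  define Q where "Q = J powr (p / 2)"
  have Q: "Q > 0" unfolding Q_def using J by simp
  have aL': "A * B = c * c * J" using aL unfolding A_def B_def .
  have "c powr (p - 1) * (G * B * T / J) = (A * B) * G * T / (Q * c * J)"
    unfolding cp1 cp A_def[symmetric] Q_def[symmetric] using c Q J by (simp add: field_simps)
  also have "\<dots> = T * G / Q * c"
    unfolding aL' using c Q J by (simp add: field_simps)
  finally show ?thesis unfolding sj Q_def[symmetric] B_def[symmetric] .
qed

lemma prod_manip:
  fixes \<alpha> t q s :: real and j :: "'n::finite \<Rightarrow> nat" and \<Gamma> :: "'n \<Rightarrow> real"
  assumes a: "\<alpha> > 0" and t: "t > 0"
  shows "(\<Prod>k\<in>UNIV. \<Gamma> k * \<alpha> powr (real (j k) * q) * t powr (real (j k) * s + 1) / fact (j k))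
       = (\<Prod>k\<in>UNIV. \<Gamma> k) * \<alpha> powr (real (mabs j) * q) * t powr (real (mabs j) * s + real CARD('n)) / real (mfact j)"
proof -
  have "(\<Prod>k\<in>UNIV. \<Gamma> k * \<alpha> powr (real (j k) * q) * t powr (real (j k) * s + 1) / fact (j k))
      = (\<Prod>k\<in>UNIV. \<Gamma> k) * (\<Prod>k\<in>UNIV. \<alpha> powr (real (j k) * q)) * (\<Prod>k\<in>UNIV. t powr (real (j k) * s + 1)) / (\<Prod>k\<in>UNIV. fact (j k))"
    by (simp add: prod.distrib prod_dividef)
  also have "(\<Prod>k\<in>UNIV. \<alpha> powr (real (j k) * q)) = \<alpha> powr (\<Sum>k\<in>UNIV. real (j k) * q)"
    using a by (simp add: powr_sum)
  also have "(\<Sum>k\<in>UNIV. real (j k) * q) = real (mabs j) * q"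
    by (simp add: mabs_def sum_distrib_right)
  also have "(\<Prod>k\<in>UNIV. t powr (real (j k) * s + 1)) = t powr (\<Sum>k\<in>UNIV. real (j k) * s + 1)"
    using t by (simp add: powr_sum)
  also have "(\<Sum>k\<in>UNIV. real (j k) * s + 1) = real (mabs j) * s + real CARD('n)"
    by (simp add: mabs_def sum_distrib_right sum.distrib)
  also have "(\<Prod>k\<in>UNIV. fact (j k) :: real) = real (mfact j)"
    by (simp add: mfact_def)
  finally show ?thesis .
qed



theorem lemma4p3:
  fixes \<alpha> p :: real and j :: "'n::finite \<Rightarrow> nat"
  assumes "\<alpha> > 0" and "1 < p"
  shows "Pop \<alpha> (Gop p \<alpha> (psi j \<alpha>)) =
    (\<lambda>z. complex_of_real ((2 / p) powr (real (mabs j) * p / 2 + real CARD('n))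
        * (\<Prod>k\<in>UNIV. Gamma (real (j k) * p / 2 + 1)) / (sqrt (real (mfact j)) powr p))
      * psi j \<alpha> z)"
proof (rule ext)
  fix z :: "complex ^ 'n"
  have a: "\<alpha> > 0" and p: "p > 1" using assms by auto
  define c where "c = sqrt (\<alpha> ^ mabs j / real (mfact j))"
  define b where "b = \<alpha> * p / 2"
  define G where "G = (\<lambda>k \<omega>. complex_of_real (\<alpha> / pi) * (exp (complex_of_real \<alpha> * (z $ k) * cnj \<omega>) * hq p (j k) b \<omega> * \<omega> ^ (j k)))"
  have b: "b > 0" unfolding b_def using a p by simp
  have Gm[measurable]: "G k \<in> borel_measurable borel" for k unfolding G_def by measurable
  have rk: "(real (j k) + real (j k) * (p - 1)) / 2 = real (j k) * p / 2" for k
    by (simp add: algebra_simps)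
  have Gint: "integrable lborel (G k)" for k
    unfolding G_def using one_dim(1)[OF p b, of \<alpha> "z $ k" "j k"] by simp
  have Gval: "(\<integral>\<omega>. G k \<omega> \<partial>lborel) = complex_of_real (\<alpha> / pi * (pi * (Gamma (real (j k) * p / 2 + 1) /
       b powr (real (j k) * p / 2 + 1)) * \<alpha> ^ (j k) / fact (j k))) * (z $ k) ^ (j k)" for k
    unfolding G_def using one_dim(2)[OF p b, of \<alpha> "z $ k" "j k"] by (simp add: rk)
  define d where "d = (\<lambda>w::complex ^ 'n. (\<alpha> / pi) ^ CARD('n) * exp (- \<alpha> * (norm w)\<^sup>2))"
  have dm[measurable]: "d \<in> borel_measurable borel" unfolding d_def by measurable
  have fm[measurable]: "(\<lambda>w. exp (complex_of_real \<alpha> * cinner z w) * Gop p \<alpha> (psi j \<alpha>) w) \<in> borel_measurable borel"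
    unfolding Gop_def psi_def mpow_def cinner_def by measurable
  have "Pop \<alpha> (Gop p \<alpha> (psi j \<alpha>)) z = (\<integral>w. d w *\<^sub>R (exp (complex_of_real \<alpha> * cinner z w) * Gop p \<alpha> (psi j \<alpha>) w) \<partial>lborel)"
    unfolding Pop_def gauss_measure_def d_def[symmetric]
    using a by (subst integral_density) (auto simp: d_def)
  also have "\<dots> = (\<integral>w. complex_of_real (c powr (p - 1)) * (\<Prod>k\<in>UNIV. G k (w $ k)) \<partial>lborel)"
    by (intro Bochner_Integration.integral_cong refl) (unfold d_def c_def G_def b_def, rule integrand_prod[OF a])
  also have "\<dots> = complex_of_real (c powr (p - 1)) * (\<Prod>k\<in>UNIV. \<integral>\<omega>. G k \<omega> \<partial>lborel)"
    by (simp add: integral_vec_prod[OF Gint Gm])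
  also have "(\<Prod>k\<in>UNIV. \<integral>\<omega>. G k \<omega> \<partial>lborel) = complex_of_real (\<Prod>k\<in>UNIV. \<alpha> / pi * (pi * (Gamma (real (j k) * p / 2 + 1) /
       b powr (real (j k) * p / 2 + 1)) * \<alpha> ^ (j k) / fact (j k))) * mpow z j"
    unfolding Gval mpow_def of_real_prod by (rule prod.distrib)
  also have "(\<Prod>k\<in>UNIV. \<alpha> / pi * (pi * (Gamma (real (j k) * p / 2 + 1) /
       b powr (real (j k) * p / 2 + 1)) * \<alpha> ^ (j k) / fact (j k))) =
     (\<Prod>k\<in>UNIV. Gamma (real (j k) * p / 2 + 1) * \<alpha> powr (real (j k) * (1 - p / 2)) * (2 / p) powr (real (j k) * (p / 2) + 1) / fact (j k))"
  proof (rule prod.cong[OF refl])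
    fix k
    show "\<alpha> / pi * (pi * (Gamma (real (j k) * p / 2 + 1) / b powr (real (j k) * p / 2 + 1)) * \<alpha> ^ (j k) / fact (j k)) =
       Gamma (real (j k) * p / 2 + 1) * \<alpha> powr (real (j k) * (1 - p / 2)) * (2 / p) powr (real (j k) * (p / 2) + 1) / fact (j k)"
      using factor_ident[OF a p, of "Gamma (real (j k) * p / 2 + 1)" "j k"] unfolding b_def by simp
  qed
  also have "\<dots> = (\<Prod>k\<in>UNIV. Gamma (real (j k) * p / 2 + 1)) * \<alpha> powr (real (mabs j) * (1 - p / 2)) *
       (2 / p) powr (real (mabs j) * (p / 2) + real CARD('n)) / real (mfact j)"
    by (rule prod_manip[OF a]) (use p in simp)
  finally have "Pop \<alpha> (Gop p \<alpha> (psi j \<alpha>)) z = complex_of_real (c powr (p - 1) * ((\<Prod>k\<in>UNIV. Gamma (real (j k) * p / 2 + 1)) * \<alpha> powr (real (mabs j) * (1 - p / 2)) *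
       (2 / p) powr (real (mabs j) * (p / 2) + real CARD('n)) / real (mfact j))) * mpow z j"
    by (simp add: mult.assoc)
  also have "c powr (p - 1) * ((\<Prod>k\<in>UNIV. Gamma (real (j k) * p / 2 + 1)) * \<alpha> powr (real (mabs j) * (1 - p / 2)) *
       (2 / p) powr (real (mabs j) * (p / 2) + real CARD('n)) / real (mfact j)) =
       (2 / p) powr (real (mabs j) * (p / 2) + real CARD('n)) * (\<Prod>k\<in>UNIV. Gamma (real (j k) * p / 2 + 1)) / (sqrt (real (mfact j)) powr p) * c"
  proof -
    have J: "real (mfact j) > 0" by (simp add: mfact_def prod_pos)
    have "c = sqrt (\<alpha> powr real (mabs j) / real (mfact j))"
      unfolding c_def using a by (simp add: powr_realpow)
    then show ?thesis
      using final_ident[OF a p J, of "real (mabs j)" "\<Prod>k\<in>UNIV. Gamma (real (j k) * p / 2 + 1)"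
          "(2 / p) powr (real (mabs j) * (p / 2) + real CARD('n))"]
      by (simp add: mult.assoc)
  qed
  finally have L: "Pop \<alpha> (Gop p \<alpha> (psi j \<alpha>)) z = complex_of_real ((2 / p) powr (real (mabs j) * (p / 2) + real CARD('n)) * (\<Prod>k\<in>UNIV. Gamma (real (j k) * p / 2 + 1)) / (sqrt (real (mfact j)) powr p) * c) * mpow z j" .
  have ps: "psi j \<alpha> z = complex_of_real c * mpow z j" by (simp add: psi_def c_def)
  show "Pop \<alpha> (Gop p \<alpha> (psi j \<alpha>)) z = complex_of_real ((2 / p) powr (real (mabs j) * p / 2 + real CARD('n))
        * (\<Prod>k\<in>UNIV. Gamma (real (j k) * p / 2 + 1)) / (sqrt (real (mfact j)) powr p)) * psi j \<alpha> z"
    unfolding L ps by (simp add: mult_ac)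
qed

end
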